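(* Let $(\mathcal{H},\langle\cdot,\cdot\rangle)$ be a real Hilbert space with induced norm $\lVert\cdot\rVert$, let $\tau,\tau_s>0$, $\alpha>0$, let $g\in\mathcal{C}^0(\mathbb{R}_{\geq0},\mathbb{R}_{\geq0})$ be monotone increasing with $g(0)=0$, and let $V\in\mathcal{C}^1(\mathbb{R}^2,\mathbb{R})$. Let $x_{s,0}\in\mathbb{R}_{\geq0}$ and $\mathbf{x}_0\in\mathcal{H}$. Assume: (A1) there exist constants $a>0$, $b\geq0$ and an increasing $h\in\mathcal{C}^0(\mathbb{R}_{\geq0},\mathbb{R}_{\geq0})$ with $h(0)=0$ such that $a r-b\leq\frac{\partial}{\partial r}V(r,x_s)$ for all $r\geq0$ and all $x_s\geq0$, and such that for all $\overline r\geq0$, all $r\in[0,\overline r]$ and all $x_s\in[0,|x_{s,0}|+g(\overline r)]$ one has $\frac{\partial}{\partial r}V(r,x_s)\leq h(\overline r)\,r$; (A2) the scalar gradient system $\dot r=-\frac{\partial}{\partial r}V(r,x_s)$ (with parameter $x_s$) has an equilibrium at $r=0$ which undergoes a subcritical pitchfork bifurcation at $x_s=\underline{x}_s$; more precisely there is $\overline{x}_s>\underline{x}_s$ such that for $x_s<\underline x_s$ it has two locally asymptotically stable equilibria $r=\pm r^*$; for $\underline x_s<x_s<\overline x_s$ it has three locally asymptotically stable equilibria $r=-r^*,0,r^*$ with $\partial r^*/\partial x_s<0$; and for $x_s>\overline x_s$, $r=0$ is globally asymptotically stable. Let $\mathbf{u}\in\mathcal{H}$ be constant with $\lVert\mathbf{u}\rVert>b/\alpha$,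 and let $(\mathbf{x}(t),x_s(t))$ be the solution, defined for $t\geq0$, of $$\tau\dot{\mathbf{x}}=-\frac{\partial}{\partial\mathbf{x}}V(\lVert\mathbf{x}\rVert,x_s)+\alpha\mathbf{u},\qquad \tau_s\dot{x}_s=-x_s+g(\lVert\mathbf{x}\rVert),$$ with $(\mathbf{x}(0),x_s(0))=(\mathbf{x}_0,x_{s,0})$. Then there exist a time $T\geq0$ and constants $\underline r,\overline r\in\mathbb{R}_{>0}$ such that $\lVert\mathbf{x}(t)\rVert\in[\underline r,\overline r]$ for all $t\geq T$.
   Context: $\frac{\partial}{\partial\mathbf{x}}V(\lVert\mathbf{x}\rVert,x_s)$ denotes the gradient in $\mathcal{H}$ of $\mathbf{x}\mapsto V(\lVert\mathbf{x}\rVert,x_s)$, equal to $\frac{\partial V}{\partial r}(\lVert\mathbf{x}\rVert,x_s)\,\mathbf{x}/\lVert\mathbf{x}\rVert$ for $\mathbf{x}\neq0$. Solutions are assumed to exist on $\mathbb{R}_{\geq0}$ for all initial conditions in $\mathcal{H}\times\mathbb{R}_{\geq0}$. *)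

theory Defs
  imports "HOL-Analysis.Analysis"
begin

definition scalar_sol :: "(real \<Rightarrow> real) \<Rightarrow> (real \<Rightarrow> real) \<Rightarrow> bool" where
  "scalar_sol f \<phi> \<longleftrightarrow> (\<forall>t\<ge>0. (\<phi> has_real_derivative f (\<phi> t)) (at t within {0..}))"

definition is_equilibrium :: "(real \<Rightarrow> real) \<Rightarrow> real \<Rightarrow> bool" where
  "is_equilibrium f e \<longleftrightarrow> f e = 0"

definition lyap_stable :: "(real \<Rightarrow> real) \<Rightarrow> real \<Rightarrow> bool" where
  "lyap_stable f e \<longleftrightarrow> (\<forall>\<epsilon>>0. \<exists>\<delta>>0. \<forall>\<phi>. scalar_sol f \<phi> \<and> \<bar>\<phi> 0 - e\<bar> < \<delta> \<longrightarrow>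
        (\<forall>t\<ge>0. \<bar>\<phi> t - e\<bar> < \<epsilon>))"

definition loc_asym_stable :: "(real \<Rightarrow> real) \<Rightarrow> real \<Rightarrow> bool" where
  "loc_asym_stable f e \<longleftrightarrow> is_equilibrium f e \<and> lyap_stable f e \<and>
     (\<exists>\<delta>>0. \<forall>\<phi>. scalar_sol f \<phi> \<and> \<bar>\<phi> 0 - e\<bar> < \<delta> \<longrightarrow> (\<phi> \<longlongrightarrow> e) at_top)"

definition glob_asym_stable :: "(real \<Rightarrow> real) \<Rightarrow> real \<Rightarrow> bool" where
  "glob_asym_stable f e \<longleftrightarrow> is_equilibrium f e \<and> lyap_stable f e \<and>
     (\<forall>\<phi>. scalar_sol f \<phi> \<longrightarrow> (\<phi> \<longlongrightarrow> e) at_top)"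

text \<open>Gradient in H of x \<mapsto> V(norm x, xs), given the partial derivative Vr = dV/dr:
  Vr(norm x, xs) x / norm x for x \<noteq> 0, and 0 at x = 0 (where Vr(0,xs) = 0 by (A2)).\<close>
definition gradV :: "(real \<Rightarrow> real \<Rightarrow> real) \<Rightarrow> 'a::real_normed_vector \<Rightarrow> real \<Rightarrow> 'a" where
  "gradV Vr x xs = (if x = 0 then 0 else (Vr (norm x) xs / norm x) *\<^sub>R x)"

end

theory Submission
  imports Defs
begin

lemma der_sq:
  fixes x :: "real \<Rightarrow> 'a::real_inner"
  assumes "(x has_vector_derivative v) (at t within S)"
  shows "((\<lambda>s. inner (x s) (x s)) has_real_derivative 2 * inner (x t) v) (at t within S)"
proof -
  have d: "(x has_derivative (\<lambda>h. h *\<^sub>R v)) (at t within S)"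
    using assms by (simp add: has_vector_derivative_def)
  have "((\<lambda>s. inner (x s) (x s)) has_derivative (\<lambda>h. inner (x t) (h *\<^sub>R v) + inner (h *\<^sub>R v) (x t))) (at t within S)"
    by (rule has_derivative_inner[OF d d])
  moreover have "(\<lambda>h. inner (x t) (h *\<^sub>R v) + inner (h *\<^sub>R v) (x t)) = (*) (2 * inner (x t) v)"
    by (auto simp: inner_commute algebra_simps)
  ultimately show ?thesis by (simp add: has_field_derivative_def)
qed

lemma der_lin:
  fixes x :: "real \<Rightarrow> 'a::real_inner"
  assumes "(x has_vector_derivative v) (at t within S)"
  shows "((\<lambda>s. inner (x s) u) has_real_derivative inner v u) (at t within S)"
proof -
  have d: "(x has_derivative (\<lambda>h. h *\<^sub>R v)) (at t within S)"
    using assms by (simp add: has_vector_derivative_def)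
  have "((\<lambda>s. inner (x s) u) has_derivative (\<lambda>h. inner (h *\<^sub>R v) u)) (at t within S)"
    using has_derivative_inner_left[OF d] .
  moreover have "(\<lambda>h. inner (h *\<^sub>R v) u) = (*) (inner v u)"
    by auto
  ultimately show ?thesis by (simp add: has_field_derivative_def)
qed

lemma barrier:
  fixes f f' :: "real \<Rightarrow> real"
  assumes der: "\<forall>t\<ge>0. (f has_real_derivative f' t) (at t within {0..})"
    and pos: "\<forall>t\<ge>0. f t < c \<longrightarrow> f' t > 0"
    and st: "st \<ge> 0" "f st \<ge> c" and tt: "t \<ge> st"
  shows "f t \<ge> c"
proof (rule ccontr)
  assume ft: "\<not> c \<le> f t"
  have cont: "continuous_on {st..t} f"
  proof -
    have "continuous (at s within {0..}) f" if "s \<ge> 0" for s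
      using der that by (meson DERIV_continuous)
    then have "continuous_on {0..} f"
      by (simp add: continuous_on_eq_continuous_within)
    then show ?thesis by (rule continuous_on_subset) (use st in auto)
  qed
  define S where "S = {st..t} \<inter> f -` {c..}"
  have "closed S" unfolding S_def by (rule continuous_closed_preimage[OF cont]) auto
  then have "compact S" unfolding S_def by (simp add: compact_eq_bounded_closed bounded_Int)
  moreover have "S \<noteq> {}" using st tt unfolding S_def by auto
  ultimately obtain m where m: "m \<in> S" "\<forall>y\<in>S. y \<le> m"
    using compact_attains_sup by blast
  have mt: "m < t" using m ft unfolding S_def by (cases "m = t") auto
  have m0: "m \<ge> 0" "m \<ge> st" "c \<le> f m" using m st unfolding S_def by auto
  have "\<exists>z\<in>{m<..<t}. f t - f m = (\<lambda>h. f' z * h) (t - m)"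
  proof (rule mvt_simple[OF mt, of f "\<lambda>z h. f' z * h"])
    fix z assume z: "m \<le> z" "z \<le> t"
    have "(f has_real_derivative f' z) (at z within {0..})" using der z m0 by auto
    then have "(f has_real_derivative f' z) (at z within {m..t})"
      by (rule DERIV_subset) (use m0 in auto)
    then show "(f has_derivative (\<lambda>h. f' z * h)) (at z within {m..t})"
      by (simp add: has_field_derivative_def)
  qed
  then obtain z where z: "m < z" "z < t" "f t - f m = f' z * (t - m)" by auto
  have "z \<notin> S" using m z by (meson not_le)
  then have "f z < c" using z m0 unfolding S_def by auto
  then have "f' z > 0" using pos z m0 by auto
  then have "f' z * (t - m) > 0" using z by simp
  then have "f t > f m" using z(3) by linarith
  then show False using ft m0 by auto
qed

theorem lemma1:
  fixes V Vr Vs :: "real \<Rightarrow> real \<Rightarrow> real"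
    and g h :: "real \<Rightarrow> real"
    and \<tau> \<tau>s \<alpha> xs0 a b xs_lo xs_hi :: real
    and rstar :: "real \<Rightarrow> real"
    and x0 u :: "'a::{real_inner, complete_space}"
    and x :: "real \<Rightarrow> 'a" and xs :: "real \<Rightarrow> real"
  assumes tau: "\<tau> > 0" and taus: "\<tau>s > 0" and alpha: "\<alpha> > 0"
    and g_cont: "continuous_on {0..} g"
    and g_nonneg: "\<forall>r\<ge>0. g r \<ge> 0"
    and g_mono: "mono_on {0..} g"
    and g0: "g 0 = 0"
    and V_C1: "\<forall>r s. ((\<lambda>(r, s). V r s) has_derivative
                 (\<lambda>(dr, ds). Vr r s * dr + Vs r s * ds)) (at (r, s))"
    and Vr_cont: "continuous_on UNIV (\<lambda>(r, s). Vr r s)"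
    and Vs_cont: "continuous_on UNIV (\<lambda>(r, s). Vs r s)"
    and xs0: "xs0 \<ge> 0"
    \<comment> \<open>(A1)\<close>
    and a_pos: "a > 0" and b_nonneg: "b \<ge> 0"
    and h_cont: "continuous_on {0..} h" and h_nonneg: "\<forall>r\<ge>0. h r \<ge> 0"
    and h_mono: "mono_on {0..} h" and h0: "h 0 = 0"
    and A1_lower: "\<forall>r\<ge>0. \<forall>s\<ge>0. a * r - b \<le> Vr r s"
    and A1_upper: "\<forall>rb\<ge>0. \<forall>r\<in>{0..rb}. \<forall>s\<in>{0..\<bar>xs0\<bar> + g rb}. Vr r s \<le> h rb * r"
    \<comment> \<open>(A2): subcritical pitchfork of  r' = - Vr(r, s)  at s = xs_lo\<close>
    and A2_eq0: "\<forall>s. is_equilibrium (\<lambda>r. - Vr r s) 0"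
    and A2_order: "xs_lo < xs_hi"
    and A2_low: "\<forall>s<xs_lo. rstar s > 0 \<and>
                   {e. loc_asym_stable (\<lambda>r. - Vr r s) e} = {- rstar s, rstar s}"
    and A2_mid: "\<forall>s\<in>{xs_lo<..<xs_hi}. rstar s > 0 \<and>
                   {e. loc_asym_stable (\<lambda>r. - Vr r s) e} = {- rstar s, 0, rstar s}
                   \<and> rstar differentiable (at s) \<and> deriv rstar s < 0"
    and A2_high: "\<forall>s>xs_hi. glob_asym_stable (\<lambda>r. - Vr r s) 0"
    \<comment> \<open>input and solution\<close>
    and u_big: "norm u > b / \<alpha>"
    and x_init: "x 0 = x0" and xs_init: "xs 0 = xs0"
    and x_ode: "\<forall>t\<ge>0. (x has_vector_derivative
                  (1 / \<tau>) *\<^sub>R (- gradV Vr (x t) (xs t) + \<alpha> *\<^sub>R u)) (at t within {0..})"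
    and xs_ode: "\<forall>t\<ge>0. (xs has_real_derivative
                  (1 / \<tau>s) * (- xs t + g (norm (x t)))) (at t within {0..})"
  shows "\<exists>T\<ge>0. \<exists>rl>0. \<exists>ru>0. \<forall>t\<ge>T. norm (x t) \<in> {rl..ru}"
proof -
  define G where "G t = gradV Vr (x t) (xs t)" for t
  define v where "v t = (1 / \<tau>) *\<^sub>R (- G t + \<alpha> *\<^sub>R u)" for t
  define n where "n t = norm (x t)" for t
  define q where "q t = inner (x t) u" for t
  have xder: "\<forall>t\<ge>0. (x has_vector_derivative v t) (at t within {0..})"
    using x_ode by (simp add: v_def G_def)
  have n0: "n t \<ge> 0" for t by (simp add: n_def)
  have qle: "q t \<le> n t * norm u" "- q t \<le> n t * norm u" for t
    using Cauchy_Schwarz_ineq2[of "x t" u] by (auto simp: q_def n_def)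
  have xs_nn: "\<forall>t\<ge>0. xs t \<ge> 0"
  proof (intro allI impI)
    fix t :: real assume t: "t \<ge> 0"
    show "xs t \<ge> 0"
    proof (rule barrier[where f = xs and f' = "\<lambda>t. (1 / \<tau>s) * (- xs t + g (norm (x t)))" and st = 0])
      show "\<forall>t\<ge>0. (xs has_real_derivative (1 / \<tau>s) * (- xs t + g (norm (x t)))) (at t within {0..})"
        using xs_ode .
      show "\<forall>t\<ge>0. xs t < 0 \<longrightarrow> 0 < 1 / \<tau>s * (- xs t + g (norm (x t)))"
      proof (intro allI impI)
        fix t :: real assume "t \<ge> 0" "xs t < 0"
        moreover have "g (norm (x t)) \<ge> 0" using g_nonneg by simp
        ultimately have "- xs t + g (norm (x t)) > 0" by linarith
        then show "0 < 1 / \<tau>s * (- xs t + g (norm (x t)))" using taus by simp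
      qed
    qed (use t xs_init xs0 in auto)
  qed
  have ig: "inner (x t) (G t) = Vr (n t) (xs t) * n t" for t
  proof (cases "x t = 0")
    case True then show ?thesis by (simp add: G_def gradV_def n_def)
  next
    case False
    then have "n t \<noteq> 0" by (simp add: n_def)
    moreover have "inner (x t) (x t) = n t ^ 2" by (simp add: n_def power2_norm_eq_inner)
    ultimately show ?thesis using False
      by (simp add: G_def gradV_def n_def[symmetric] power2_eq_square)
  qed
  have igu: "x t \<noteq> 0 \<Longrightarrow> inner (G t) u = Vr (n t) (xs t) / n t * q t" for t
    by (simp add: G_def gradV_def n_def q_def)
  have G0: "x t = 0 \<Longrightarrow> G t = 0" for t by (simp add: G_def gradV_def)
  define B where "B = b + \<alpha> * norm u"
  define W where "W = max (inner x0 x0) ((B / a) ^ 2)"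
  have B0: "B \<ge> 0" using b_nonneg alpha by (simp add: B_def)
  have w_bd: "\<forall>t\<ge>0. inner (x t) (x t) \<le> W"
  proof (intro allI impI)
    fix t :: real assume t: "t \<ge> 0"
    have "- W \<le> - inner (x t) (x t)"
    proof (rule barrier[where f = "\<lambda>t. - inner (x t) (x t)" and f' = "\<lambda>t. - (2 * inner (x t) (v t))" and st = 0])
      show "\<forall>t\<ge>0. ((\<lambda>t. - inner (x t) (x t)) has_real_derivative - (2 * inner (x t) (v t))) (at t within {0..})"
        using xder by (auto intro!: DERIV_minus der_sq)
      show "\<forall>t\<ge>0. - inner (x t) (x t) < - W \<longrightarrow> 0 < - (2 * inner (x t) (v t))"
      proof (intro allI impI)
        fix t :: real assume t: "t \<ge> 0" and lt: "- inner (x t) (x t) < - W"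
        have "(B / a) ^ 2 < n t ^ 2" using lt by (simp add: W_def n_def power2_norm_eq_inner)
        then have nb: "B / a < n t" using n0 by (meson power_less_imp_less_base)
        then have anb: "a * n t > B" using a_pos by (simp add: pos_divide_less_eq mult.commute)
        have "B / a \<ge> 0" using B0 a_pos by simp
        then have npos: "n t > 0" using nb by linarith
        have h1: "Vr (n t) (xs t) * n t \<ge> (a * n t - b) * n t"
          using A1_lower n0 xs_nn t by (intro mult_right_mono) auto
        have h2: "\<alpha> * q t \<le> \<alpha> * (n t * norm u)" using qle alpha by simp
        have h3: "n t * (B - a * n t) < 0" using npos anb by (simp add: mult_pos_neg)
        have h4: "- ((a * n t - b) * n t) + \<alpha> * (n t * norm u) = n t * (B - a * n t)"
          by (simp add: B_def algebra_simps)
        have "inner (x t) (v t) = (1 / \<tau>) * (- inner (x t) (G t) + \<alpha> * q t)"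
          by (simp add: v_def q_def inner_add_right inner_minus_right inner_diff_right)
        also have "\<dots> < 0"
          using h1 h2 h3 h4 tau unfolding ig by (intro mult_pos_neg) auto
        finally show "0 < - (2 * inner (x t) (v t))" by simp
      qed
    qed (use t x_init W_def in auto)
    then show "inner (x t) (x t) \<le> W" by simp
  qed
  define R where "R = sqrt W + 1"
  have nR: "\<forall>t\<ge>0. n t \<le> R"
  proof (intro allI impI)
    fix t :: real assume "t \<ge> 0"
    then have "sqrt (inner (x t) (x t)) \<le> sqrt W" using w_bd by (simp add: real_sqrt_le_mono)
    then show "n t \<le> R" unfolding R_def n_def norm_eq_sqrt_inner by linarith
  qed
  have "W \<ge> 0" unfolding W_def by (simp add: le_max_iff_disj)
  then have R0: "R > 0" unfolding R_def using real_sqrt_ge_zero[of W] by linarith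
  define X where "X = max xs0 (g R)"
  have xs_up: "\<forall>t\<ge>0. xs t \<le> \<bar>xs0\<bar> + g R"
  proof (intro allI impI)
    fix t :: real assume t: "t \<ge> 0"
    have "- X \<le> - xs t"
    proof (rule barrier[where f = "\<lambda>t. - xs t" and f' = "\<lambda>t. - ((1 / \<tau>s) * (- xs t + g (norm (x t))))" and st = 0])
      show "\<forall>t\<ge>0. ((\<lambda>t. - xs t) has_real_derivative - ((1 / \<tau>s) * (- xs t + g (norm (x t))))) (at t within {0..})"
        using xs_ode by (auto intro!: DERIV_minus)
      show "\<forall>t\<ge>0. - xs t < - X \<longrightarrow> 0 < - ((1 / \<tau>s) * (- xs t + g (norm (x t))))"
      proof (intro allI impI)
        fix t :: real assume t: "t \<ge> 0" and lt: "- xs t < - X"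
        have "g (norm (x t)) \<le> g R"
          using g_mono nR t R0 by (intro mono_onD[OF g_mono]) (auto simp: n_def)
        then have "- xs t + g (norm (x t)) < 0" using lt by (simp add: X_def)
        then show "0 < - ((1 / \<tau>s) * (- xs t + g (norm (x t))))"
          using taus by (simp add: divide_neg_pos)
      qed
    qed (use t xs_init X_def in auto)
    moreover have "g R \<ge> 0" using g_nonneg R0 by auto
    ultimately show "xs t \<le> \<bar>xs0\<bar> + g R" using xs0 by (simp add: X_def)
  qed
  define C where "C = h R"
  have C0: "C \<ge> 0" using h_nonneg R0 by (simp add: C_def)
  have Vr_up: "\<forall>t\<ge>0. Vr (n t) (xs t) \<le> C * n t"
  proof (intro allI impI)
    fix t :: real assume t: "t \<ge> 0"
    have "n t \<in> {0..R}" using nR n0 t by simp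
    moreover have "xs t \<in> {0..\<bar>xs0\<bar> + g R}" using xs_nn xs_up t by simp
    moreover have "R \<ge> 0" using R0 by simp
    ultimately show "Vr (n t) (xs t) \<le> C * n t" using A1_upper unfolding C_def by blast
  qed
  define K where "K = norm u * (\<alpha> * norm u - b)"
  have aub: "\<alpha> * norm u > b" using u_big alpha by (simp add: divide_less_eq mult.commute)
  have "b / \<alpha> \<ge> 0" using alpha b_nonneg by simp
  then have u0: "norm u > 0" using u_big by linarith
  have K0: "K > 0" unfolding K_def using aub u0 by simp
  have KleA: "K \<le> \<alpha> * (norm u)^2"
    using b_nonneg u0 by (simp add: K_def power2_eq_square algebra_simps)
  define \<epsilon> where "\<epsilon> = K / (2 * (C + 1))"
  have eps0: "\<epsilon> > 0" using K0 C0 by (simp add: \<epsilon>_def)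
  have Ceps: "C * \<epsilon> \<le> K / 2"
  proof -
    have "C * \<epsilon> \<le> (C + 1) * \<epsilon>" using eps0 by simp
    also have "\<dots> = K / 2" using C0 by (simp add: \<epsilon>_def field_simps)
    finally show ?thesis .
  qed
  have qd: "inner (v t) u = (1 / \<tau>) * (- inner (G t) u + \<alpha> * (norm u)^2)" for t
    by (simp add: v_def inner_add_left inner_diff_left power2_norm_eq_inner)
  have qpos: "\<forall>t\<ge>0. q t \<le> \<epsilon> \<longrightarrow> inner (v t) u \<ge> K / (2 * \<tau>)"
  proof (intro allI impI)
    fix t :: real assume t: "t \<ge> 0" and qe: "q t \<le> \<epsilon>"
    have main: "- inner (G t) u + \<alpha> * (norm u)^2 \<ge> K / 2"
    proof (cases "x t = 0")
      case True then show ?thesis using G0 KleA K0 by simp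
    next
      case False
      then have npos: "n t > 0" by (simp add: n_def)
      show ?thesis
      proof (cases "q t \<le> 0")
        case True
        have "Vr (n t) (xs t) * q t \<le> (a * n t - b) * q t"
          using A1_lower n0 xs_nn t True by (intro mult_right_mono_neg) auto
        moreover have "a * n t * q t \<le> 0" using a_pos n0 True
          by (simp add: mult_nonneg_nonpos)
        moreover have "- b * q t \<le> b * (n t * norm u)"
          using qle(2)[of t] b_nonneg mult_left_mono by fastforce
        ultimately have "Vr (n t) (xs t) * q t \<le> b * norm u * n t"
          by (simp add: algebra_simps)
        then have "Vr (n t) (xs t) / n t * q t \<le> b * norm u"
          using npos by (simp add: pos_divide_le_eq)
        moreover have "K = \<alpha> * (norm u)^2 - b * norm u" by (simp add: K_def power2_eq_square algebra_simps)
        ultimately show ?thesis using igu[OF False] K0 by linarith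
      next
        case False
        have "Vr (n t) (xs t) * q t \<le> C * n t * q t"
          using Vr_up t False by (intro mult_right_mono) auto
        then have "Vr (n t) (xs t) / n t * q t \<le> C * q t"
          using npos by (simp add: pos_divide_le_eq algebra_simps)
        also have "\<dots> \<le> C * \<epsilon>" using qe C0 by (simp add: mult_left_mono)
        finally show ?thesis using igu[OF \<open>x t \<noteq> 0\<close>] Ceps KleA by simp
      qed
    qed
    have "K / (2 * \<tau>) = (1 / \<tau>) * (K / 2)" by simp
    also have "\<dots> \<le> (1 / \<tau>) * (- inner (G t) u + \<alpha> * (norm u)^2)"
      using main tau by (intro mult_left_mono) auto
    finally show "inner (v t) u \<ge> K / (2 * \<tau>)" by (simp add: qd)
  qed
  have qder: "\<forall>t\<ge>0. (q has_real_derivative inner (v t) u) (at t within {0..})"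
    using xder unfolding q_def by (auto intro: der_lin)
  have Kt: "K / (2 * \<tau>) > 0" using K0 tau by simp
  obtain t1 where t1: "t1 \<ge> 0" "q t1 \<ge> \<epsilon>"
  proof (rule ccontr)
    assume "\<not> thesis"
    then have all: "\<forall>t\<ge>0. q t < \<epsilon>" using that by (meson not_le)
    define T0 where "T0 = 2 * \<tau> * (\<bar>q 0\<bar> + \<epsilon>) / K + 1"
    have "2 * \<tau> * (\<bar>q 0\<bar> + \<epsilon>) / K \<ge> 0" using tau K0 eps0 by simp
    then have T0pos: "T0 > 0" unfolding T0_def by linarith
    have "\<exists>z\<in>{0<..<T0}. q T0 - q 0 = (\<lambda>z h. inner (v z) u * h) z (T0 - 0)"
    proof (rule mvt_simple[OF T0pos, of q "\<lambda>z h. inner (v z) u * h"])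
      fix z assume z: "0 \<le> z" "z \<le> T0"
      have "(q has_real_derivative inner (v z) u) (at z within {0..})"
        using qder z(1) by blast
      then have "(q has_real_derivative inner (v z) u) (at z within {0..T0})"
        by (rule DERIV_subset) auto
      then show "(q has_derivative (\<lambda>h. inner (v z) u * h)) (at z within {0..T0})"
        by (simp add: has_field_derivative_def)
    qed
    then obtain z where z: "0 < z" "z < T0" "q T0 - q 0 = inner (v z) u * T0" by auto
    have "q z \<le> \<epsilon>" using all[rule_format, of z] z(1) by linarith
    then have "inner (v z) u \<ge> K / (2 * \<tau>)" using qpos z(1) by simp
    then have "inner (v z) u * T0 \<ge> K / (2 * \<tau>) * T0"
      using T0pos by (intro mult_right_mono) auto
    moreover have "K / (2 * \<tau>) * T0 = (\<bar>q 0\<bar> + \<epsilon>) + K / (2 * \<tau>)"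
      using tau K0 by (simp add: T0_def field_simps)
    ultimately have "q T0 \<ge> q 0 + \<bar>q 0\<bar> + \<epsilon> + K / (2 * \<tau>)" using z by linarith
    then have "q T0 > \<epsilon>" using Kt by linarith
    then show False using all[rule_format, of T0] T0pos by linarith
  qed
  have qfin: "\<forall>t\<ge>t1. q t \<ge> \<epsilon>"
  proof (intro allI impI)
    fix t assume "t \<ge> t1"
    show "q t \<ge> \<epsilon>"
    proof (rule barrier[where f = q and f' = "\<lambda>t. inner (v t) u" and st = t1])
      show "\<forall>t\<ge>0. q t < \<epsilon> \<longrightarrow> 0 < inner (v t) u"
      proof (intro allI impI)
        fix t :: real assume "t \<ge> 0" "q t < \<epsilon>"
        then have "inner (v t) u \<ge> K / (2 * \<tau>)" using qpos by simp
        then show "0 < inner (v t) u" using Kt by linarith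
      qed
    qed (use qder t1 \<open>t \<ge> t1\<close> in auto)
  qed
  show ?thesis
  proof (intro exI conjI allI impI)
    show "t1 \<ge> 0" by fact
    show "\<epsilon> / norm u > 0" using eps0 u0 by simp
    show "R > 0" by fact
    fix t assume t: "t1 \<le> t"
    have "\<epsilon> \<le> n t * norm u" using qfin[rule_format, OF t] qle(1)[of t] by linarith
    then have "\<epsilon> / norm u \<le> norm (x t)" using u0 by (simp add: pos_divide_le_eq n_def)
    moreover have "norm (x t) \<le> R" using nR t t1 n_def by auto
    ultimately show "norm (x t) \<in> {\<epsilon> / norm u..R}" by simp
  qed
qed

end
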